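(* Let $V$ be a real sequence with $\liminf_{n\to\infty}V_n>C>0$, and let $G_{jk}=\psi^+_{\min(j,k)}\psi^-_{\max(j,k)}$ be a Green matrix for $(-\Delta+V)\psi=0$, where $\psi^-$ is a nonzero solution square-summable at infinity and $\psi^+$ is a solution with $\psi^-_n\psi^+_{n+1}-\psi^-_{n+1}\psi^+_n=1$. Define $$K_A:=\sqrt{1+\left(\frac{2}{C(C+2)}\right)^2}+\frac{2}{C(C+2)}.$$ Then for $n$ sufficiently large, $$\frac{1}{V_n+2}\le G_{nn}\le\frac{K_A}{V_n+2},$$ and consequently, with $z_n=\sqrt{G_{nn}}$ and $S^{[z]}_n=\frac{1+\sqrt{1+4z_n^2z_{n-1}^2}}{2z_nz_{n-1}}$, $$\frac{\sqrt{(V_n+2)(V_{n-1}+2)}+\sqrt{4+(V_n+2)(V_{n-1}+2)}}{2K_A}\le S^{[z]}_n\le\frac{\sqrt{(V_n+2)(V_{n-1}+2)}+\sqrt{4+(V_n+2)(V_{n-1}+2)}}{2}.$$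
   Context: $(\Delta f)_n=f_{n+1}+f_{n-1}-2f_n$; $(-\Delta+V)\psi=0$ means $-\psi_{n+1}-\psi_{n-1}+(2+V_n)\psi_n=0$. *)

theory Defs
  imports "HOL-Analysis.Analysis"
begin

text \<open>Solutions of (-Delta+V)psi=0 on the half-line indexed by nat:
  -psi(n+1) - psi(n-1) + (2 + V n) psi n = 0 for all n >= 1.\<close>
definition is_solution :: "(nat \<Rightarrow> real) \<Rightarrow> (nat \<Rightarrow> real) \<Rightarrow> bool" where
  "is_solution V psi \<longleftrightarrow>
     (\<forall>n\<ge>1. - psi (n + 1) - psi (n - 1) + (2 + V n) * psi n = 0)"

definition green :: "(nat \<Rightarrow> real) \<Rightarrow> (nat \<Rightarrow> real) \<Rightarrow> nat \<Rightarrow> nat \<Rightarrow> real" where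
  "green psip psim j k = psip (min j k) * psim (max j k)"

definition K_A :: "real \<Rightarrow> real" where
  "K_A C = sqrt (1 + (2 / (C * (C + 2)))^2) + 2 / (C * (C + 2))"

definition S_z :: "(nat \<Rightarrow> real) \<Rightarrow> nat \<Rightarrow> real" where
  "S_z z n = (1 + sqrt (1 + 4 * (z n)^2 * (z (n - 1))^2)) / (2 * z n * z (n - 1))"

end

theory Submission imports Defs begin

lemma sol_rec:
  assumes "is_solution V p"
  shows "p (m + 2) = (2 + V (m+1)) * p (m+1) - p m"
  using assms unfolding is_solution_def
proof -
  have "- p (m + 1 + 1) - p (m + 1 - 1) + (2 + V (m+1)) * p (m+1) = 0"
    using assms unfolding is_solution_def by (meson le_add2)
  then show ?thesis by (simp add: algebra_simps)
qed

lemma eventually_V: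
  assumes "liminf (\<lambda>n. ereal (V n)) > ereal C"
  shows "\<exists>N. \<forall>n\<ge>N. V n > C"
proof -
  have "eventually (\<lambda>n. ereal (V n) > ereal C) sequentially"
    using less_LiminfD[OF assms] .
  then show ?thesis by (auto simp: eventually_sequentially)
qed

lemma zero_unique:
  assumes sol: "is_solution V p" and z: "p m = 0" "p (m+1) = 0"
  shows "p k = 0"
proof -
  have fw: "p (m+j) = 0 \<and> p (m+j+1) = 0" for j
  proof (induction j)
    case 0 then show ?case using z by simp
  next
    case (Suc j)
    have "p (m+j+2) = (2 + V (m+j+1)) * p (m+j+1) - p (m+j)" using sol_rec[OF sol] .
    then show ?case using Suc by (simp add: add.assoc)
  qed
  have bw: "j \<le> m \<Longrightarrow> p (m-j) = 0 \<and> p (m-j+1) = 0" for j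
  proof (induction j)
    case 0 then show ?case using z by simp
  next
    case (Suc j)
    define i where "i = m - Suc j"
    have e1: "m - j = i + 1" "m - j + 1 = i + 2" using Suc.prems i_def by auto
    have "p (i+2) = (2 + V (i+1)) * p (i+1) - p i" using sol_rec[OF sol] .
    moreover have "p (i+1) = 0" "p (i+2) = 0" using Suc e1 by auto
    ultimately have "p i = 0" by simp
    then show ?case using e1 \<open>p (i+1) = 0\<close> i_def by simp
  qed
  show ?thesis
  proof (cases "k \<le> m")
    case True then show ?thesis using bw[of "m-k"] by simp
  next
    case False then show ?thesis using fw[of "k-m"] by simp
  qed
qed

lemma decay:
  assumes sol: "is_solution V p" and lim: "p \<longlonglongrightarrow> 0"
    and pos: "\<forall>n\<ge>N0. V n \<ge> 0" and mN: "m \<ge> N0" and pm: "p m \<noteq> 0"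
  shows "p m * p (m+1) > 0 \<and> \<bar>p (m+1)\<bar> < \<bar>p m\<bar>"
proof -
  define Q where "Q k \<longleftrightarrow> \<bar>p (k+1)\<bar> \<ge> \<bar>p k\<bar> \<and> p (k+1) \<noteq> 0" for k
  have step: "Q (k+1)" if "Q k" "k \<ge> N0" for k
  proof -
    have r: "p (k+2) = (2 + V (k+1)) * p (k+1) - p k" using sol_rec[OF sol] .
    have "V (k+1) \<ge> 0" using pos that by auto
    then have "\<bar>(2 + V (k+1)) * p (k+1)\<bar> \<ge> 2 * \<bar>p (k+1)\<bar>"
      by (simp add: abs_mult mult_right_mono)
    then have "\<bar>p (k+2)\<bar> \<ge> \<bar>p (k+1)\<bar>" "p (k+2) \<noteq> 0" using r that(1) unfolding Q_def by linarith+
    then show ?thesis unfolding Q_def by (simp add: add.assoc)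
  qed
  have noQ: "\<not> Q k" if "k \<ge> N0" for k
  proof
    assume q: "Q k"
    have all: "Q (k+j) \<and> \<bar>p (k+1+j)\<bar> \<ge> \<bar>p (k+1)\<bar>" for j
    proof (induction j)
      case 0 then show ?case using q by simp
    next
      case (Suc j)
      have "Q (k+j+1)" using step[of "k+j"] Suc that by simp
      then show ?case using Suc unfolding Q_def by (simp add: add.assoc)
    qed
    have "p (k+1) \<noteq> 0" using q Q_def by auto
    then have "\<bar>p (k+1)\<bar> > 0" by simp
    from lim[unfolded LIMSEQ_iff, rule_format, OF this]
    obtain M where "\<forall>n\<ge>M. \<bar>p n\<bar> < \<bar>p (k+1)\<bar>" by auto
    then have "\<bar>p (k+1+M)\<bar> < \<bar>p (k+1)\<bar>" by simp
    with all[of M] show False by simp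
  qed
  have r: "p (m+2) = (2 + V (m+1)) * p (m+1) - p m" using sol_rec[OF sol] .
  have v: "V (m+1) \<ge> 0" using pos mN by auto
  have A: "p m * p (m+1) > 0"
  proof (rule ccontr)
    assume "\<not> ?thesis"
    then have "p m * p (m+1) \<le> 0" by simp
    have "Q (m+1)"
    proof (cases "p m > 0")
      case True
      then have "p (m+1) \<le> 0" using \<open>p m * p (m+1) \<le> 0\<close> by (simp add: mult_le_0_iff)
      then have "(2 + V (m+1)) * p (m+1) \<le> p (m+1)" proof -
        have "V (m+1) * p (m+1) \<le> 0" using v \<open>p (m+1) \<le> 0\<close> by (simp add: mult_nonneg_nonpos)
        then show ?thesis using \<open>p (m+1) \<le> 0\<close> by (simp add: algebra_simps)
      qed
      then have "p (m+2) < p (m+1)" "p (m+1) \<le> 0" using r True \<open>p (m+1) \<le> 0\<close> by linarith+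
      then show ?thesis unfolding Q_def by (simp add: add.assoc)
    next
      case False
      then have pm': "p m < 0" using pm by simp
      then have "p (m+1) \<ge> 0" using \<open>p m * p (m+1) \<le> 0\<close> by (simp add: mult_le_0_iff)
      then have "(2 + V (m+1)) * p (m+1) \<ge> p (m+1)" using v by (simp add: algebra_simps)
      then have "p (m+2) > p (m+1)" "p (m+1) \<ge> 0" using r pm' \<open>p (m+1) \<ge> 0\<close> by linarith+
      then show ?thesis unfolding Q_def by (simp add: add.assoc)
    qed
    then show False using noQ[of "m+1"] mN by simp
  qed
  then have "p (m+1) \<noteq> 0" by auto
  then have "\<bar>p (m+1)\<bar> < \<bar>p m\<bar>" using noQ[OF mN] unfolding Q_def by auto
  with A show ?thesis by simp
qed

lemma KA_ge: assumes "C > 0" shows "K_A C \<ge> 1 + 2 / (C * (C + 2))"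
proof -
  have "sqrt (1 + (2 / (C * (C + 2)))^2) \<ge> 1" by simp
  then show ?thesis unfolding K_A_def by simp
qed

lemma bounds_lemma:
  fixes a e C :: real
  assumes C: "C > 0" and a: "a > 2 + C" and e0: "0 < e" and e1: "e * (1 + C) < 2"
  shows "1 / a \<le> 1 / (a - e) \<and> 1 / (a - e) \<le> K_A C / a"
proof -
  define K where "K = K_A C"
  define x where "x = 2 / (C * (C + 2))"
  have Kx: "K - 1 \<ge> x" using KA_ge[OF C] unfolding K_def x_def by simp
  have x2: "x * (C * (C+2)) = 2" unfolding x_def using C by simp
  have x0: "x > 0" unfolding x_def using C by simp
  have "(K - 1) * (C * (C+3)) \<ge> x * (C * (C+3))" using Kx C by (simp add: mult_right_mono)
  moreover have "x * (C * (C+3)) \<ge> x * (C * (C+2))" using x0 C by (simp add: mult_left_mono)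
  ultimately have y: "(K - 1) * (C * (C+3)) \<ge> 2" using x2 by linarith
  have Kg1: "K \<ge> 1" using Kx x0 by simp
  have e2: "e < 2 / (1+C)" using e1 C by (simp add: field_simps)
  have "a - e > 0"
  proof -
    have "2 / (1+C) < 2" using C by (simp add: field_simps)
    then show ?thesis using a e2 C by linarith
  qed
  have lo: "1 / a \<le> 1 / (a - e)" using \<open>a - e > 0\<close> e0 by (simp add: frac_le)
  have "K * e \<le> K * (2 / (1+C))" using Kg1 e2 by (intro mult_left_mono) auto
  also have "\<dots> \<le> (K - 1) * (2 + C)"
  proof -
    have "2 * K \<le> (K - 1) * ((1+C) * (2+C))"
    proof -
      have "(K - 1) * ((1+C) * (2+C)) = (K - 1) * (C * (C+3)) + 2 * (K - 1)" by (simp add: algebra_simps)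
      then show ?thesis using y by (smt (verit))
    qed
    then show ?thesis using C by (simp add: field_simps)
  qed
  also have "\<dots> \<le> (K - 1) * a" using Kg1 a by (simp add: mult_left_mono)
  finally have "a \<le> K * (a - e)" by (simp add: algebra_simps)
  then have "1 / (a - e) \<le> K / a" using \<open>a - e > 0\<close> a C by (simp add: field_simps)
  then show ?thesis using lo K_def by simp
qed

lemma S_lemma:
  fixes gn gm an am K :: real
  assumes an: "an > 0" and am: "am > 0" and K: "K \<ge> 1"
    and g1: "1 / an \<le> gn" "gn \<le> K / an" and g2: "1 / am \<le> gm" "gm \<le> K / am"
    and S: "S = (1 + sqrt (1 + 4 * (sqrt gn)^2 * (sqrt gm)^2)) / (2 * sqrt gn * sqrt gm)"
    and P: "P = an * am"
  shows "(sqrt P + sqrt (4 + P)) / (2 * K) \<le> S \<and> S \<le> (sqrt P + sqrt (4 + P)) / 2"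
proof -
  have gn0: "gn > 0" using g1 an by (meson less_le_trans zero_less_divide_1_iff)
  have gm0: "gm > 0" using g2 am by (meson less_le_trans zero_less_divide_1_iff)
  define w where "w = sqrt gn * sqrt gm"
  have w0: "w > 0" using gn0 gm0 w_def by simp
  have w2: "w^2 = gn * gm" using gn0 gm0 w_def by (simp add: power_mult_distrib)
  define y where "y = 1 / (2 * w)"
  have y0: "y > 0" using w0 y_def by simp
  have "S = (1 + sqrt (1 + 4 * w^2)) / (2 * w)" using S w2 gn0 gm0 by (simp add: w_def mult.assoc)
  also have "\<dots> = y + sqrt (1 + 4 * w^2) / (2 * w)" using y_def by (simp add: add_divide_distrib)
  also have "sqrt (1 + 4 * w^2) / (2 * w) = sqrt (y^2 + 1)"
  proof -
    have "sqrt (1 + 4 * w^2) / (2 * w) = sqrt ((1 + 4 * w^2) / (2*w)^2)"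
      using w0 by (simp add: real_sqrt_divide real_sqrt_mult)
    also have "(1 + 4 * w^2) / (2*w)^2 = y^2 + 1" unfolding y_def using w0 by (simp add: field_simps power2_eq_square)
    finally show ?thesis .
  qed
  finally have Sy: "S = y + sqrt (y^2 + 1)" .
  have P0: "P > 0" using P an am by simp
  have y2: "y^2 = 1 / (4 * (gn * gm))" using y_def w2 by (simp add: power_mult_distrib power2_eq_square)
  have lo: "1 / P \<le> gn * gm"
  proof -
    have "1 / P = (1/an) * (1/am)" using P by simp
    also have "\<dots> \<le> gn * gm" using g1 g2 an am gn0 by (intro mult_mono) auto
    finally show ?thesis .
  qed
  have hi: "gn * gm \<le> K^2 / P"
  proof -
    have "gn * gm \<le> (K/an) * (K/am)" using g1 g2 gn0 gm0 by (intro mult_mono) auto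
    also have "\<dots> = K^2 / P" using P by (simp add: power2_eq_square)
    finally show ?thesis .
  qed
  have yhi: "y^2 \<le> P / 4"
  proof -
    have "1 / (4 * (gn * gm)) \<le> 1 / (4 * (1 / P))" using lo P0 gn0 gm0 by (intro divide_left_mono) auto
    then show ?thesis using y2 P0 by simp
  qed
  have ylo: "P / (4 * K^2) \<le> y^2"
  proof -
    have "1 / (4 * (K^2 / P)) \<le> 1 / (4 * (gn * gm))" using hi gn0 gm0 P0 K by (intro divide_left_mono) auto
    then show ?thesis using y2 P0 K by simp
  qed
  have ub1: "y \<le> sqrt P / 2"
  proof -
    have "y = sqrt (y^2)" using y0 by simp
    also have "\<dots> \<le> sqrt (P/4)" using yhi by (rule real_sqrt_le_mono)
    also have "\<dots> = sqrt P / 2" by (simp add: real_sqrt_divide)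
    finally show ?thesis .
  qed
  have ub2: "sqrt (y^2 + 1) \<le> sqrt (4 + P) / 2"
  proof -
    have "sqrt (y^2 + 1) \<le> sqrt ((4 + P) / 4)" using yhi by (intro real_sqrt_le_mono) simp
    also have "\<dots> = sqrt (4+P) / 2" by (simp add: real_sqrt_divide)
    finally show ?thesis .
  qed
  have K0: "K > 0" using K by simp
  have lb1: "sqrt P / (2 * K) \<le> y"
  proof -
    have "sqrt P / (2 * K) = sqrt (P / (4 * K^2))" using K0 by (simp add: real_sqrt_divide real_sqrt_mult)
    also have "\<dots> \<le> sqrt (y^2)" using ylo by (rule real_sqrt_le_mono)
    also have "\<dots> = y" using y0 by simp
    finally show ?thesis .
  qed
  have lb2: "sqrt (4 + P) / (2 * K) \<le> sqrt (y^2 + 1)"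
  proof -
    have k1: "1 / K^2 \<le> 1" using K by (simp add: field_simps one_le_power)
    have "(4 + P) / (4 * K^2) = 1 / K^2 + P / (4 * K^2)" using K0 by (simp add: field_simps)
    then have "(4 + P) / (4 * K^2) \<le> y^2 + 1" using ylo k1 by linarith
    then have "sqrt ((4 + P) / (4 * K^2)) \<le> sqrt (y^2 + 1)" by (rule real_sqrt_le_mono)
    moreover have "sqrt ((4 + P) / (4 * K^2)) = sqrt (4 + P) / (2 * K)" using K0 by (simp add: real_sqrt_divide real_sqrt_mult)
    ultimately show ?thesis by simp
  qed
  have "(sqrt P + sqrt (4 + P)) / (2 * K) = sqrt P / (2*K) + sqrt (4 + P) / (2 * K)" by (simp add: add_divide_distrib)
  then show ?thesis using Sy ub1 ub2 lb1 lb2 by (simp add: add_divide_distrib)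
qed

lemma ratio_lemma:
  fixes x y :: real
  assumes "x * y > 0" "\<bar>y\<bar> < \<bar>x\<bar>"
  shows "0 < y / x \<and> y / x < 1"
proof -
  have x0: "x \<noteq> 0" using assms by auto
  have "0 < y / x" using assms(1) by (auto simp add: zero_less_mult_iff zero_less_divide_iff)
  moreover have "\<bar>y / x\<bar> < 1" using assms(2) x0 by (simp add: abs_divide divide_less_eq)
  ultimately show ?thesis by (metis abs_divide abs_of_pos)
qed

theorem lemma3:
  fixes V psip psim :: "nat \<Rightarrow> real" and C :: real
  assumes "C > 0"
    and "liminf (\<lambda>n. ereal (V n)) > ereal C"
    and "is_solution V psim" and "psim \<noteq> (\<lambda>_. 0)" and "summable (\<lambda>n. (psim n)^2)"
    and "is_solution V psip"
    and "\<forall>n. psim n * psip (n + 1) - psim (n + 1) * psip n = 1"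
  shows "\<forall>\<^sub>F n in sequentially.
      1 / (V n + 2) \<le> green psip psim n n \<and> green psip psim n n \<le> K_A C / (V n + 2)
    \<and> (let z = (\<lambda>m. sqrt (green psip psim m m));
           P = (V n + 2) * (V (n - 1) + 2)
       in (sqrt P + sqrt (4 + P)) / (2 * K_A C) \<le> S_z z n
          \<and> S_z z n \<le> (sqrt P + sqrt (4 + P)) / 2)"
proof -
  define p where "p = psim"
  define q where "q = psip"
  have C: "C > 0" using assms(1) .
  have solp: "is_solution V p" using assms(3) p_def by simp
  have solq: "is_solution V q" using assms(6) q_def by simp
  have W: "p n * q (n+1) - p (n+1) * q n = 1" for n using assms(7) p_def q_def by simp
  obtain N0 where VN0: "\<forall>n\<ge>N0. V n > C" using eventually_V[OF assms(2)] by auto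
  have pos: "\<forall>n\<ge>N0. V n \<ge> 0" using VN0 C by (auto intro: less_imp_le less_trans)
  have plim: "p \<longlonglongrightarrow> 0"
  proof -
    have "(\<lambda>n. (p n)^2) \<longlonglongrightarrow> 0" using summable_LIMSEQ_zero[OF assms(5)] p_def by simp
    then have "(\<lambda>n. sqrt ((p n)^2)) \<longlonglongrightarrow> sqrt 0" by (intro tendsto_real_sqrt)
    then have "(\<lambda>n. \<bar>p n\<bar>) \<longlonglongrightarrow> 0" by simp
    then show ?thesis by (simp add: tendsto_rabs_zero_iff)
  qed
  obtain m1 where m1: "m1 \<ge> N0" "p m1 \<noteq> 0"
  proof (cases "p N0 = 0 \<and> p (N0+1) = 0")
    case True
    then have "p k = 0" for k using zero_unique[OF solp] by blast
    then have "psim = (\<lambda>_. 0)" using p_def by auto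
    then show ?thesis using assms(4) by simp
  next
    case False
    then show ?thesis using that[of N0] that[of "N0+1"] by auto
  qed
  have pnz0: "p (m1 + k) \<noteq> 0" for k
  proof (induction k)
    case 0 then show ?case using m1 by simp
  next
    case (Suc k)
    have "p (m1+k) * p (m1+k+1) > 0" using decay[OF solp plim pos _ Suc.IH] m1 by simp
    then show ?case by auto
  qed
  have pnz: "p n \<noteq> 0" if "n \<ge> m1" for n using pnz0[of "n - m1"] that by simp
  have dec: "p n * p (n+1) > 0 \<and> \<bar>p (n+1)\<bar> < \<bar>p n\<bar>" if "n \<ge> m1" for n
    using decay[OF solp plim pos _ pnz[OF that]] that m1 by simp
  have pbound0: "\<bar>p (m1 + k)\<bar> \<le> \<bar>p m1\<bar>" for k
  proof (induction k)
    case 0 then show ?case by simp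
  next
    case (Suc k) then show ?case using dec[of "m1+k"] by simp
  qed
  have pbound: "\<bar>p n\<bar> \<le> \<bar>p m1\<bar>" if "n \<ge> m1" for n using pbound0[of "n - m1"] that by simp
  define r where "r n = p (n+1) / p n" for n
  have r01: "0 < r n \<and> r n < 1" if "n \<ge> m1" for n
    using ratio_lemma[of "p n" "p (n+1)"] dec[OF that] r_def by simp
  have rC: "r n * (1 + C) < 1" if "n \<ge> m1" for n
  proof -
    have rec: "p (n+2) = (2 + V (n+1)) * p (n+1) - p n" using sol_rec[OF solp] .
    have pn1: "p (n+1) \<noteq> 0" using pnz that by simp
    have "p n / p (n+1) = (2 + V (n+1)) - r (n+1)"
      using rec pn1 unfolding r_def by (simp add: field_simps)
    moreover have "r (n+1) < 1" using r01 that by simp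
    moreover have "V (n+1) > C" using VN0 that m1 by simp
    ultimately have big: "p n / p (n+1) > 1 + C" by linarith
    define B where "B = p n / p (n+1)"
    have "r n = 1 / B" unfolding r_def B_def by simp
    then have "r n * (1 + C) = (1 + C) / B" by simp
    also have "\<dots> < 1"
    proof -
      have "B > 1 + C" using big B_def by simp
      then show ?thesis using C by (simp add: divide_less_eq)
    qed
    finally show ?thesis .
  qed
  define h where "h n = q n / p n" for n
  define \<delta> where "\<delta> = 1 / (p m1)^2"
  have \<delta>0: "\<delta> > 0" using m1 \<delta>_def by simp
  have hstep: "h (n+1) - h n \<ge> \<delta>" if "n \<ge> m1" for n
  proof -
    have pn: "p n \<noteq> 0" "p (n+1) \<noteq> 0" using pnz that by auto
    have "h (n+1) - h n = 1 / (p n * p (n+1))"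
      unfolding h_def using pn W[of n] by (simp add: field_simps)
    moreover have "p n * p (n+1) \<le> (p m1)^2"
    proof -
      have "p n * p (n+1) \<le> \<bar>p n\<bar> * \<bar>p (n+1)\<bar>" by (metis abs_ge_self abs_mult)
      also have "\<dots> \<le> \<bar>p m1\<bar> * \<bar>p m1\<bar>" using pbound[OF that] pbound[of "n+1"] that
        by (intro mult_mono) auto
      finally show ?thesis by (simp add: power2_eq_square)
    qed
    moreover have "p n * p (n+1) > 0" using dec that by simp
    ultimately show ?thesis unfolding \<delta>_def by (simp add: frac_le)
  qed
  have hmono0: "h (n + k) \<ge> h n + real k * \<delta>" if "n \<ge> m1" for n k
  proof (induction k)
    case 0 then show ?case by simp
  next
    case (Suc k)
    have "h (n+k+1) - h (n+k) \<ge> \<delta>" using hstep[of "n+k"] that by simp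
    then show ?case using Suc by (simp add: algebra_simps)
  qed
  obtain k where k: "real k > - h m1 / \<delta>" using reals_Archimedean2 by blast
  define N2 where "N2 = m1 + k"
  have hN2: "h N2 > 0"
  proof -
    have "real k * \<delta> > - h m1" using k \<delta>0 by (simp add: field_simps)
    then show ?thesis using hmono0[of m1 k] N2_def by simp
  qed
  have hpos: "h n > 0" if "n \<ge> N2" for n
  proof -
    have "h n \<ge> h N2 + real (n - N2) * \<delta>" using hmono0[of N2 "n - N2"] that N2_def by simp
    moreover have "real (n - N2) * \<delta> \<ge> 0" using \<delta>0 by simp
    ultimately show ?thesis using hN2 by linarith
  qed
  define g where "g n = q n * p n" for n
  have gpos: "g n > 0" if "n \<ge> N2" for n
  proof -
    have "p n \<noteq> 0" using pnz that N2_def by simp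
    then have "g n = h n * (p n)^2" unfolding g_def h_def by (simp add: power2_eq_square)
    then show ?thesis using hpos[OF that] \<open>p n \<noteq> 0\<close> by simp
  qed
  have qnz: "q n \<noteq> 0" if "n \<ge> N2" for n using gpos[OF that] g_def by auto
  define t where "t n = q (n+1) / q n" for n
  have gt: "1 / g n = t n - r n" if "n \<ge> N2" for n
  proof -
    have "p n \<noteq> 0" "q n \<noteq> 0" using pnz qnz that N2_def by auto
    then show ?thesis unfolding g_def t_def r_def using W[of n] by (simp add: field_simps)
  qed
  have trec: "t (n+1) = (2 + V (n+1)) - 1 / t n" if "n \<ge> N2" for n
  proof -
    have rec: "q (n+2) = (2 + V (n+1)) * q (n+1) - q n" using sol_rec[OF solq] .
    have "q n \<noteq> 0" "q (n+1) \<noteq> 0" using qnz that by auto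
    then show ?thesis unfolding t_def using rec by (simp add: field_simps)
  qed
  have "\<exists>M. M \<ge> N2 \<and> t M > 1"
  proof (rule ccontr)
    assume nex: "\<not> (\<exists>M. M \<ge> N2 \<and> t M > 1)"
    have tle: "t n \<le> 1" if "n \<ge> N2" for n using that nex by (meson not_le)
    have tpos: "t n > 0" if "n \<ge> N2" for n
    proof -
      have "r n > 0" using r01 that N2_def by simp
      moreover have "1 / g n > 0" using gpos[OF that] by simp
      ultimately show ?thesis using gt[OF that] by linarith
    qed
    have qb0: "\<bar>q (N2 + j)\<bar> \<le> \<bar>q N2\<bar>" for j
    proof (induction j)
      case 0 then show ?case by simp
    next
      case (Suc j)
      have "q (N2+j+1) = t (N2+j) * q (N2+j)" using qnz[of "N2+j"] unfolding t_def by simp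
      then have "\<bar>q (N2+j+1)\<bar> = t (N2+j) * \<bar>q (N2+j)\<bar>" using tpos[of "N2+j"] by (simp add: abs_mult)
      also have "\<dots> \<le> 1 * \<bar>q (N2+j)\<bar>" using tle[of "N2+j"] by (intro mult_right_mono) auto
      finally show ?case using Suc by simp
    qed
    have qN2: "\<bar>q N2\<bar> > 0" using qnz by simp
    from plim[unfolded LIMSEQ_iff, rule_format, of "1 / \<bar>q N2\<bar>"] qN2
    obtain L where L: "\<forall>n\<ge>L. \<bar>p n\<bar> < 1 / \<bar>q N2\<bar>" by auto
    define n where "n = N2 + L"
    have nN: "n \<ge> N2" "n \<ge> L" using n_def by auto
    have "1 / g n < 1" using gt[OF nN(1)] tle[OF nN(1)] r01[of n] nN N2_def by simp
    then have g1: "g n > 1" using gpos[OF nN(1)] by (simp add: divide_less_eq)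
    have "g n = \<bar>q n\<bar> * \<bar>p n\<bar>" using gpos[OF nN(1)] unfolding g_def by (simp add: abs_mult[symmetric])
    also have "\<dots> \<le> \<bar>q N2\<bar> * \<bar>p n\<bar>" using qb0[of L] n_def by (intro mult_right_mono) auto
    also have "\<dots> < \<bar>q N2\<bar> * (1 / \<bar>q N2\<bar>)" using L nN qN2 by (intro mult_strict_left_mono) auto
    also have "\<dots> = 1" using qN2 by simp
    finally show False using g1 by simp
  qed
  then obtain M where M: "M \<ge> N2" "t M > 1" by blast
  have tgt0: "t (M + j) > 1" for j
  proof (induction j)
    case 0 then show ?case using M by simp
  next
    case (Suc j)
    have "V (M+j+1) > C" using VN0 M m1 N2_def by simp
    moreover have "1 / t (M+j) < 1" using Suc by simp
    ultimately show ?case using trec[of "M+j"] M C by simp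
  qed
  have tC: "(1 / t n) * (1 + C) < 1" if "n \<ge> M + 1" for n
  proof -
    define j where "j = n - M - 1"
    have j: "n = M + j + 1" using that j_def by auto
    have "V (M+j+1) > C" using VN0 M m1 N2_def by simp
    moreover have "1 / t (M+j) < 1" using tgt0[of j] by simp
    ultimately have "t n > 1 + C" using trec[of "M+j"] M j by simp
    then show ?thesis using C by (simp add: field_simps)
  qed
  have key: "1 / (V n + 2) \<le> g n \<and> g n \<le> K_A C / (V n + 2)" if "n \<ge> M + 2" for n
  proof -
    define j where "j = n - 1"
    have j: "n = j + 1" "j \<ge> M + 1" using that j_def by auto
    define e where "e = r n + 1 / t j"
    have nN2: "n \<ge> N2" "j \<ge> N2" using that M j by auto
    have "1 / g n = (V n + 2) - e"
      using gt[OF nN2(1)] trec[OF nN2(2)] j e_def by simp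
    then have ge: "g n = 1 / ((V n + 2) - e)" by (metis inverse_eq_divide inverse_inverse_eq)
    have rn: "r n > 0" "r n * (1 + C) < 1" using r01 rC nN2 N2_def by auto
    have tj: "t j > 1" using tgt0[of "j - M"] j by simp
    have "1 / t j > 0" using tj by simp
    then have e0: "e > 0" using rn e_def by linarith
    have e1: "e * (1 + C) < 2" using rn tC[OF j(2)] e_def by (simp add: distrib_right)
    have a: "V n + 2 > 2 + C" using VN0 nN2 M m1 N2_def by simp
    show ?thesis using bounds_lemma[OF C a e0 e1] ge by simp
  qed
  show ?thesis
  proof (rule eventually_sequentiallyI[of "M + 3"])
    fix n assume n: "n \<ge> M + 3"
    have kn: "1 / (V n + 2) \<le> g n" "g n \<le> K_A C / (V n + 2)" using key[of n] n by auto
    have km: "1 / (V (n-1) + 2) \<le> g (n-1)" "g (n-1) \<le> K_A C / (V (n-1) + 2)" using key[of "n-1"] n by auto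
    have gg: "green psip psim m m = g m" for m unfolding green_def g_def p_def q_def by simp
    have "V n > C" "V (n-1) > C" using VN0 n M m1 N2_def by auto
    then have an: "V n + 2 > 0" "V (n-1) + 2 > 0" using C by auto
    have K1: "K_A C \<ge> 1" using KA_ge[OF C] C by (smt (verit) divide_pos_pos mult_pos_pos)
    have S: "S_z (\<lambda>m. sqrt (green psip psim m m)) n =
      (1 + sqrt (1 + 4 * (sqrt (g n))^2 * (sqrt (g (n-1)))^2)) / (2 * sqrt (g n) * sqrt (g (n-1)))"
      unfolding S_z_def gg by simp
    show "1 / (V n + 2) \<le> green psip psim n n \<and> green psip psim n n \<le> K_A C / (V n + 2)
    \<and> (let z = (\<lambda>m. sqrt (green psip psim m m));
           P = (V n + 2) * (V (n - 1) + 2)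
       in (sqrt P + sqrt (4 + P)) / (2 * K_A C) \<le> S_z z n
          \<and> S_z z n \<le> (sqrt P + sqrt (4 + P)) / 2)"
      using S_lemma[OF an(1) an(2) K1 kn km S refl] kn gg by (simp add: Let_def)
  qed
qed

end
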